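(* Let $$c(k,d):=\begin{cases}\dfrac{\pi^2k^2}{(2j_{0,1}+\pi(k-1))^2} & \text{if } d=2,\\[2mm] \dfrac{\pi^2k^2}{4\,j_{d/2-1,(k+1)/2}^2} & \text{if } d\ge 3 \text{ and } k \text{ odd},\\[2mm] \dfrac{\pi^2k^2}{\left(j_{d/2-1,k/2}+j_{d/2-1,k/2+1}\right)^2} & \text{if } d\ge 3\text{ and } k \text{ even},\end{cases}$$ for $k\in\mathbb{N}$, $d\ge 2$. Then: (1) $c(k,d)<1$ for all $k\in\mathbb{N}$ and $d\ge 2$; (2) for each fixed $d\ge 2$, $c(k,d)\to 1$ as $k\to\infty$; (3) for each fixed $k\in\mathbb{N}$ there exists a constant $C_k>0$ such that $c(k,d)\le C_k/d^2$ for all $d\ge 2$.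
   Context: $j_{\nu,m}$ denotes the $m$-th positive zero of the Bessel function $J_\nu$ of the first kind of order $\nu$. *)

theory Defs
  imports "HOL-Analysis.Analysis"
begin

definition bessel_J :: "real \<Rightarrow> real \<Rightarrow> real" where
  "bessel_J nu x = (\<Sum>m. (-1)^m / (fact m * Gamma (real m + nu + 1)) * (x/2) powr (2 * real m + nu))"

definition bessel_zero :: "real \<Rightarrow> nat \<Rightarrow> real" where
  "bessel_zero nu m = (THE x. 0 < x \<and> bessel_J nu x = 0 \<and>
      card {y. 0 < y \<and> y < x \<and> bessel_J nu y = 0} = m - 1)"

definition c_kd :: "nat \<Rightarrow> nat \<Rightarrow> real" where
  "c_kd k d =
    (if d = 2 then pi^2 * real k^2 / (2 * bessel_zero 0 1 + pi * (real k - 1))^2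
     else if odd k then pi^2 * real k^2 / (4 * (bessel_zero (real d / 2 - 1) ((k + 1) div 2))^2)
     else pi^2 * real k^2 / (bessel_zero (real d / 2 - 1) (k div 2) + bessel_zero (real d / 2 - 1) (k div 2 + 1))^2)"

end

theory Submission
  imports Defs
begin


definition bc :: "real \<Rightarrow> nat \<Rightarrow> real" where
  "bc nu m = (-1)^m / (fact m * Gamma (real m + nu + 1))"

lemma bc_Suc:
  assumes "nu \<ge> 0"
  shows "bc nu (Suc m) = - bc nu m / ((real m + 1) * (real m + nu + 1))"
proof -
  have ni: "real m + nu + 1 \<notin> \<int>\<^sub>\<le>\<^sub>0" using assms nonpos_Ints_nonpos by fastforce
  have g: "Gamma (real (Suc m) + nu + 1) = (real m + nu + 1) * Gamma (real m + nu + 1)"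
    using Gamma_plus1[OF ni] by (simp add: add_ac)
  have "bc nu (Suc m) = (-1) * (-1)^m / (((real m + 1) * fact m) * ((real m + nu + 1) * Gamma (real m + nu + 1)))"
    unfolding bc_def g by (simp add: algebra_simps)
  also have "\<dots> = - ((-1)^m / (fact m * Gamma (real m + nu + 1))) / ((real m + 1) * (real m + nu + 1))"
    by (simp add: mult_ac)
  finally show ?thesis unfolding bc_def .
qed

lemma bc_summable:
  assumes "nu \<ge> 0"
  shows "summable (\<lambda>m. bc nu m * y ^ m)"
proof (rule summable_ratio_test[where c="1/2" and N="nat \<lceil>2 * \<bar>y\<bar>\<rceil>"])
  fix n assume n: "n \<ge> nat \<lceil>2 * \<bar>y\<bar>\<rceil>"
  have "2 * \<bar>y\<bar> \<le> real (nat \<lceil>2 * \<bar>y\<bar>\<rceil>)" by (rule real_nat_ceiling_ge)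
  also have "\<dots> \<le> real n" by (rule of_nat_mono[OF n])
  finally have ny: "2 * \<bar>y\<bar> \<le> real n" .
  have "(real n + 1) \<le> (real n + 1) * (real n + nu + 1)"
    using mult_left_mono[of 1 "real n + nu + 1" "real n + 1"] assms by simp
  then have d: "(real n + 1) * (real n + nu + 1) \<ge> 2 * \<bar>y\<bar>" using ny by linarith
  have pos: "(real n + 1) * (real n + nu + 1) > 0" using assms by (simp add: add_pos_nonneg)
  have q: "\<bar>y\<bar> / ((real n + 1) * (real n + nu + 1)) \<le> 1/2"
    using d pos by (simp add: divide_le_eq)
  have "norm (bc nu (Suc n) * y ^ Suc n) = \<bar>bc nu n * y ^ n\<bar> * (\<bar>y\<bar> / ((real n + 1) * (real n + nu + 1)))"
    using assms by (simp add: bc_Suc[OF assms] abs_mult abs_divide power_abs mult_ac)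
  also have "\<dots> \<le> \<bar>bc nu n * y ^ n\<bar> * (1/2)"
    using q by (intro mult_left_mono) auto
  finally show "norm (bc nu (Suc n) * y ^ Suc n) \<le> 1/2 * norm (bc nu n * y ^ n)" by simp
qed simp

definition G0 :: "real \<Rightarrow> real \<Rightarrow> real" where "G0 nu y = (\<Sum>m. bc nu m * y ^ m)"
definition G1 :: "real \<Rightarrow> real \<Rightarrow> real" where "G1 nu y = (\<Sum>m. diffs (bc nu) m * y ^ m)"
definition G2 :: "real \<Rightarrow> real \<Rightarrow> real" where "G2 nu y = (\<Sum>m. diffs (diffs (bc nu)) m * y ^ m)"

lemma bc1_summable: "nu \<ge> 0 \<Longrightarrow> summable (\<lambda>m. diffs (bc nu) m * y ^ m)"
  by (rule termdiff_converges_all) (rule bc_summable)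

lemma bc2_summable: "nu \<ge> 0 \<Longrightarrow> summable (\<lambda>m. diffs (diffs (bc nu)) m * y ^ m)"
  by (rule termdiff_converges_all) (rule bc1_summable)

lemma G0_deriv: "nu \<ge> 0 \<Longrightarrow> (G0 nu has_real_derivative G1 nu y) (at y)"
  unfolding G0_def[abs_def] G1_def
  by (rule termdiffs_strong_converges_everywhere) (rule bc_summable)

lemma G1_deriv: "nu \<ge> 0 \<Longrightarrow> (G1 nu has_real_derivative G2 nu y) (at y)"
  unfolding G1_def[abs_def] G2_def
  by (rule termdiffs_strong_converges_everywhere) (rule bc1_summable)

lemma G_ode:
  assumes nu: "nu \<ge> 0"
  shows "y * G2 nu y + (nu + 1) * G1 nu y + G0 nu y = 0"
proof -
  define d where "d = diffs (bc nu)"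
  have s2: "(\<lambda>m. diffs d m * y ^ m) sums G2 nu y"
    unfolding d_def G2_def using bc2_summable[OF nu] by (simp add: summable_sums)
  have "(\<lambda>m. real (Suc m) * d (Suc m) * y ^ Suc m) sums (y * G2 nu y)"
    using sums_mult[OF s2, of y] by (simp add: diffs_def mult_ac)
  then have a: "(\<lambda>m. real m * d m * y ^ m) sums (y * G2 nu y)"
    using sums_Suc_iff[where f="\<lambda>m. real m * d m * y ^ m"] by simp
  have b: "(\<lambda>m. (nu + 1) * (d m * y ^ m)) sums ((nu + 1) * G1 nu y)"
    unfolding d_def G1_def using bc1_summable[OF nu] by (intro sums_mult summable_sums)
  have c: "(\<lambda>m. bc nu m * y ^ m) sums G0 nu y"
    unfolding G0_def using bc_summable[OF nu] by (simp add: summable_sums)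
  have "(\<lambda>m. real m * d m * y ^ m + (nu + 1) * (d m * y ^ m) + bc nu m * y ^ m) sums
      (y * G2 nu y + (nu + 1) * G1 nu y + G0 nu y)"
    by (intro sums_add a b c)
  moreover have "(\<lambda>m. real m * d m * y ^ m + (nu + 1) * (d m * y ^ m) + bc nu m * y ^ m) = (\<lambda>m. 0)"
  proof
    fix m
    have pos: "(real m + 1) * (real m + nu + 1) > 0" using nu by (simp add: add_pos_nonneg)
    have "d m = - bc nu m / (real m + nu + 1)"
    proof -
      have p1: "real m + 1 > 0" "real m + nu + 1 > 0" using nu by auto
      have "d m = real (Suc m) * bc nu (Suc m)" by (simp add: d_def diffs_def)
      also have "\<dots> = (real m + 1) * (- bc nu m / ((real m + 1) * (real m + nu + 1)))"
        by (simp only: bc_Suc[OF nu] of_nat_Suc add.commute[of 1 "real m"])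
      also have "\<dots> = ((real m + 1) * (- bc nu m)) / ((real m + 1) * (real m + nu + 1))"
        by (simp only: times_divide_eq_right)
      also have "\<dots> = - bc nu m / (real m + nu + 1)"
        using p1(1) by (intro mult_divide_mult_cancel_left) simp
      finally show ?thesis .
    qed
    then have "real m * d m + (nu + 1) * d m + bc nu m = 0"
      using pos nu by (simp add: field_simps)
    then show "real m * d m * y ^ m + (nu + 1) * (d m * y ^ m) + bc nu m * y ^ m = 0"
      by (metis distrib_right mult.assoc mult_zero_left)
  qed
  ultimately show ?thesis using sums_unique2 sums_zero by metis
qed



definition FF :: "real \<Rightarrow> real \<Rightarrow> real" where "FF nu x = G0 nu (x^2/4)"
definition FF1 :: "real \<Rightarrow> real \<Rightarrow> real" where "FF1 nu x = x / 2 * G1 nu (x^2/4)"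
definition FF2 :: "real \<Rightarrow> real \<Rightarrow> real" where "FF2 nu x = G1 nu (x^2/4) / 2 + x^2/4 * G2 nu (x^2/4)"

lemma FF_deriv: "nu \<ge> 0 \<Longrightarrow> (FF nu has_real_derivative FF1 nu x) (at x)"
proof -
  assume nu: "nu \<ge> 0"
  have "((\<lambda>x. G0 nu (x^2/4)) has_real_derivative G1 nu (x^2/4) * (x/2)) (at x)"
    by (rule DERIV_chain2[OF G0_deriv[OF nu]]) (auto intro!: derivative_eq_intros)
  then show ?thesis unfolding FF_def[abs_def] FF1_def by (simp add: mult_ac)
qed

lemma FF1_deriv: "nu \<ge> 0 \<Longrightarrow> (FF1 nu has_real_derivative FF2 nu x) (at x)"
  unfolding FF1_def[abs_def] FF2_def
  by (auto intro!: derivative_eq_intros DERIV_chain2[OF G1_deriv] simp: algebra_simps power2_eq_square)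

lemma FF_cont: "nu \<ge> 0 \<Longrightarrow> isCont (FF nu) x"
  using FF_deriv DERIV_isCont by blast

definition uu :: "real \<Rightarrow> real \<Rightarrow> real" where "uu nu x = x powr (nu + 1/2) * FF nu x"
definition uu1 :: "real \<Rightarrow> real \<Rightarrow> real" where
  "uu1 nu x = (nu + 1/2) * x powr (nu - 1/2) * FF nu x + x powr (nu + 1/2) * FF1 nu x"
definition qq :: "real \<Rightarrow> real \<Rightarrow> real" where "qq nu x = 1 - (nu^2 - 1/4) / x^2"

lemma uu_deriv:
  assumes "nu \<ge> 0" "x > 0"
  shows "(uu nu has_real_derivative uu1 nu x) (at x)"
proof -
  have "(uu nu has_real_derivative ((nu + 1/2) * x powr (nu + 1/2 - 1) * FF nu x + x powr (nu + 1/2) * FF1 nu x)) (at x)"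
    unfolding uu_def[abs_def]
    by (rule derivative_eq_intros has_real_derivative_powr FF_deriv refl assms)+ simp
  then show ?thesis unfolding uu1_def by (simp add: algebra_simps)
qed

lemma uu1_deriv:
  assumes nu: "nu \<ge> 0" and x: "x > 0"
  shows "(uu1 nu has_real_derivative (- qq nu x * uu nu x)) (at x)"
proof -
  define P where "P = x powr (nu + 1/2)"
  have p1: "x powr (nu - 1/2) = P / x"
  proof -
    have "x powr (nu + 1/2 - 1) = x powr (nu + 1/2) / x powr 1" by (rule powr_diff)
    then show ?thesis using x by (simp add: P_def)
  qed
  have p2: "x powr (nu - 1/2 - 1) = P / x^2"
  proof -
    have "x powr (nu + 1/2 - 2) = x powr (nu + 1/2) / x powr 2" by (rule powr_diff)
    moreover have "x powr 2 = x^2" using x by (simp add: powr_numeral)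
    moreover have "nu - 1/2 - 1 = nu + 1/2 - 2" by simp
    ultimately show ?thesis by (simp add: P_def)
  qed
  have "(uu1 nu has_real_derivative
      ((nu + 1/2) * ((nu - 1/2) * x powr (nu - 1/2 - 1)) * FF nu x + (nu + 1/2) * x powr (nu - 1/2) * FF1 nu x
       + ((nu + 1/2) * x powr (nu + 1/2 - 1) * FF1 nu x + x powr (nu + 1/2) * FF2 nu x))) (at x)"
    unfolding uu1_def[abs_def]
    by (rule derivative_eq_intros has_real_derivative_powr FF_deriv FF1_deriv refl assms)+ (simp add: algebra_simps)
  moreover have "(nu + 1/2) * ((nu - 1/2) * x powr (nu - 1/2 - 1)) * FF nu x + (nu + 1/2) * x powr (nu - 1/2) * FF1 nu x
       + ((nu + 1/2) * x powr (nu + 1/2 - 1) * FF1 nu x + x powr (nu + 1/2) * FF2 nu x) = - qq nu x * uu nu x"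
  proof -
    obtain A B C where ABC: "G0 nu (x^2/4) = A" "G1 nu (x^2/4) = B" "G2 nu (x^2/4) = C" by blast
    have e: "(x^2/4) * C + (nu + 1) * B + A = 0"
      using G_ode[OF nu, of "x^2/4"] unfolding ABC .
    then have eA: "A = - ((x^2/4) * C + (nu + 1) * B)" by linarith
    have h: "nu + 1/2 - 1 = nu - 1/2" by simp
    show ?thesis
      unfolding h p1 p2 qq_def uu_def P_def[symmetric] FF_def FF1_def FF2_def ABC eA using x
      by (simp add: field_simps power2_eq_square)
  qed
  ultimately show ?thesis by simp
qed



lemma bessel_J_eq:
  assumes nu: "nu \<ge> 0" and x: "x > 0"
  shows "bessel_J nu x = (x/2) powr nu * FF nu x"
proof -
  have t: "(-1)^m / (fact m * Gamma (real m + nu + 1)) * (x/2) powr (2 * real m + nu)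
      = (x/2) powr nu * (bc nu m * (x^2/4)^m)" for m
  proof -
    have "(x/2) powr (2 * real m + nu) = (x/2) powr (real (2*m)) * (x/2) powr nu"
      by (simp add: powr_add)
    also have "(x/2) powr (real (2*m)) = (x/2)^(2*m)"
      by (rule powr_realpow) (use x in simp)
    also have "(x/2)^(2*m) = (x^2/4)^m"
      by (simp add: power_mult power_divide)
    finally show ?thesis by (simp add: bc_def mult_ac)
  qed
  show ?thesis unfolding bessel_J_def t FF_def G0_def
    by (rule suminf_mult[OF bc_summable[OF nu]])
qed

lemma bc_nonneg_even: "nu \<ge> 0 \<Longrightarrow> bc nu (2*n) \<ge> 0"
  unfolding bc_def by (auto intro!: divide_nonneg_pos mult_pos_pos)

lemma G0_pos:
  assumes nu: "nu \<ge> 0" and y: "0 \<le> y" "y < 1"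
  shows "G0 nu y > 0"
proof -
  define t where "t m = bc nu m * y ^ m" for m
  define p where "p n = sum t {n*2..<n*2+2}" for n
  have ts: "t sums G0 nu y" unfolding t_def G0_def using bc_summable[OF nu] by (simp add: summable_sums)
  have ps: "p sums G0 nu y" unfolding p_def by (rule sums_group[OF ts]) simp
  have peq: "p n = bc nu (2*n) * y^(2*n) * (1 - y / ((2 * real n + 1) * (2 * real n + nu + 1)))" for n
  proof -
    have "p n = t (2*n) + t (Suc (2*n))" unfolding p_def by (simp add: mult.commute numeral_2_eq_2)
    also have "\<dots> = bc nu (2*n) * y^(2*n) - bc nu (2*n) / ((real (2*n) + 1) * (real (2*n) + nu + 1)) * (y * y^(2*n))"
      unfolding t_def bc_Suc[OF nu] by simp
    also have "\<dots> = bc nu (2*n) * y^(2*n) * (1 - y / ((2 * real n + 1) * (2 * real n + nu + 1)))"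
      by (simp add: algebra_simps)
    finally show ?thesis .
  qed
  have q: "y / ((2 * real n + 1) * (2 * real n + nu + 1)) < 1" for n
  proof -
    have "1 \<le> (2 * real n + 1) * (2 * real n + nu + 1)"
      using mult_mono[of 1 "2*real n+1" 1 "2*real n+nu+1"] nu by simp
    then show ?thesis using y by (simp add: divide_less_eq)
  qed
  have pnn: "p n \<ge> 0" for n
    unfolding peq using q[of n] bc_nonneg_even[OF nu, of n] y by (simp add: less_imp_le)
  have b0: "bc nu 0 > 0" unfolding bc_def using nu by simp
  have p0: "p 0 > 0" unfolding peq using q[of 0] b0 by simp
  show ?thesis using suminf_pos2[OF sums_summable[OF ps] pnn p0] sums_unique[OF ps] by simp
qed

lemma FF_pos: "nu \<ge> 0 \<Longrightarrow> 0 < x \<Longrightarrow> x < 2 \<Longrightarrow> FF nu x > 0"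
  unfolding FF_def
  by (rule G0_pos) (auto simp: power2_eq_square intro!: mult_strict_mono[of x 2 x 2, simplified])

lemma J_zero_iff: "nu \<ge> 0 \<Longrightarrow> 0 < x \<Longrightarrow> bessel_J nu x = 0 \<longleftrightarrow> uu nu x = 0"
  by (simp add: bessel_J_eq uu_def)



lemma incr_deriv:
  fixes f f' :: "real \<Rightarrow> real"
  assumes "a \<le> b" "\<And>t. a \<le> t \<Longrightarrow> t \<le> b \<Longrightarrow> (f has_real_derivative f' t) (at t)"
    "\<And>t. a < t \<Longrightarrow> t < b \<Longrightarrow> f' t \<ge> 0"
  shows "f a \<le> f b"
proof (rule DERIV_nonneg_imp_increasing_open[OF assms(1)])
  show "continuous_on {a..b} f"
    by (intro continuous_at_imp_continuous_on ballI) (meson DERIV_isCont assms(2) atLeastAtMost_iff)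
next
  fix x assume "a < x" "x < b"
  then show "\<exists>y. (f has_real_derivative y) (at x) \<and> 0 \<le> y"
    using assms(2)[of x] assms(3)[of x] by auto
qed

lemma decr_deriv:
  fixes f f' :: "real \<Rightarrow> real"
  assumes "a \<le> b" "\<And>t. a \<le> t \<Longrightarrow> t \<le> b \<Longrightarrow> (f has_real_derivative f' t) (at t)"
    "\<And>t. a < t \<Longrightarrow> t < b \<Longrightarrow> f' t \<le> 0"
  shows "f a \<ge> f b"
proof (rule DERIV_nonpos_imp_decreasing_open[OF assms(1)])
  show "continuous_on {a..b} f"
    by (intro continuous_at_imp_continuous_on ballI) (meson DERIV_isCont assms(2) atLeastAtMost_iff)
next
  fix x assume "a < x" "x < b"
  then show "\<exists>y. (f has_real_derivative y) (at x) \<and> y \<le> 0"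
    using assms(2)[of x] assms(3)[of x] by auto
qed

lemma two_ab_le: "\<bar>2 * a * b\<bar> \<le> a^2 + (b::real)^2"
proof -
  have "0 \<le> (a - b)^2" "0 \<le> (a + b)^2" by simp_all
  then show ?thesis by (simp add: power2_eq_square algebra_simps abs_le_iff)
qed

locale sturm =
  fixes u u1 :: "real \<Rightarrow> real" and c :: real
  assumes D1: "\<And>x. x > 0 \<Longrightarrow> (u has_real_derivative u1 x) (at x)"
  and D2: "\<And>x. x > 0 \<Longrightarrow> (u1 has_real_derivative (-(1 - c/x^2) * u x)) (at x)"
begin

lemma neg: "sturm (\<lambda>x. - u x) (\<lambda>x. - u1 x) c"
  by unfold_locales (auto intro!: derivative_eq_intros D1 D2)

lemma contu: "x > 0 \<Longrightarrow> isCont u x"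
  using D1 DERIV_isCont by blast

lemma contu_on: "0 < a \<Longrightarrow> continuous_on {a..b} u"
  by (intro continuous_at_imp_continuous_on) (auto intro: contu)

lemma uniq:
  assumes x0: "x0 > 0" "u x0 = 0" "u1 x0 = 0" and x: "x > 0"
  shows "u x = 0"
proof -
  define al where "al = min x x0"
  have al: "al > 0" "al \<le> x" "al \<le> x0" using x0 x by (auto simp: al_def)
  define L where "L = \<bar>c\<bar> / al^2"
  have L: "L \<ge> 0" unfolding L_def by simp
  define E where "E t = (u t)^2 + (u1 t)^2" for t
  define E' where "E' t = 2 * u t * u1 t + 2 * u1 t * (-(1 - c/t^2) * u t)" for t
  have dE: "(E has_real_derivative E' t) (at t)" if "t > 0" for t
    unfolding E_def[abs_def] E'_def
    by (rule derivative_eq_intros D1 D2 that refl)+ (simp add: algebra_simps)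
  have bnd: "\<bar>E' t\<bar> \<le> L * E t" if "t \<ge> al" for t
  proof -
    have t0: "t > 0" using that al by linarith
    have "E' t = c / t^2 * (2 * u t * u1 t)" unfolding E'_def using t0 by (simp add: field_simps)
    then have "\<bar>E' t\<bar> = \<bar>c\<bar> / t^2 * \<bar>2 * u t * u1 t\<bar>" by (simp add: abs_mult)
    also have "\<dots> \<le> \<bar>c\<bar> / t^2 * E t" unfolding E_def
      by (intro mult_left_mono two_ab_le) simp
    also have "\<dots> \<le> L * E t" unfolding L_def
    proof (intro mult_right_mono divide_left_mono)
      show "al^2 \<le> t^2" using that al by (intro power_mono) auto
    qed (use al t0 in \<open>auto simp: E_def\<close>)
    finally show ?thesis .
  qed
  have E0: "E x0 = 0" unfolding E_def using x0 by simp
  have Enn: "E t \<ge> 0" for t unfolding E_def by simp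
  have "E x = 0"
  proof (cases "x0 \<le> x")
    case True
    define H where "H t = E t * exp (- L * t)" for t
    have "H x0 \<ge> H x"
    proof (rule decr_deriv[OF True, where f' = "\<lambda>t. E' t * exp (- L * t) + E t * (exp (- L * t) * (- L))"])
      fix t assume "x0 \<le> t" "t \<le> x"
      then have t0: "t > 0" using x0 by linarith
      show "(H has_real_derivative E' t * exp (- L * t) + E t * (exp (- L * t) * (- L))) (at t)"
        unfolding H_def[abs_def] by (rule derivative_eq_intros dE[OF t0] refl)+ simp
    next
      fix t assume "x0 < t" "t < x"
      then have "t \<ge> al" using al by linarith
      then have "E' t \<le> L * E t" using bnd by (meson abs_le_D1)
      then show "E' t * exp (- L * t) + E t * (exp (- L * t) * (- L)) \<le> 0"
        by (simp add: algebra_simps mult_right_mono)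
    qed
    then have "E x * exp (- L * x) \<le> 0" unfolding H_def using E0 by simp
    then show ?thesis using Enn[of x] by (simp add: mult_le_0_iff antisym)
  next
    case False
    then have le: "x \<le> x0" by simp
    define H where "H t = E t * exp (L * t)" for t
    have "H x \<le> H x0"
    proof (rule incr_deriv[OF le, where f' = "\<lambda>t. E' t * exp (L * t) + E t * (exp (L * t) * L)"])
      fix t assume "x \<le> t" "t \<le> x0"
      then have t0: "t > 0" using x by linarith
      show "(H has_real_derivative E' t * exp (L * t) + E t * (exp (L * t) * L)) (at t)"
        unfolding H_def[abs_def] by (rule derivative_eq_intros dE[OF t0] refl)+ simp
    next
      fix t assume "x < t" "t < x0"
      then have "t \<ge> al" using al by linarith
      then have "- E' t \<le> L * E t" using bnd by (meson abs_le_D2)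
      then show "E' t * exp (L * t) + E t * (exp (L * t) * L) \<ge> 0"
      proof -
        assume h: "- E' t \<le> L * E t"
        have "0 \<le> (E' t + L * E t) * exp (L * t)" using h by (intro mult_nonneg_nonneg) auto
        then show ?thesis by (simp add: algebra_simps)
      qed
    qed
    then have "E x * exp (L * x) \<le> 0" unfolding H_def using E0 by simp
    then show ?thesis using Enn[of x] by (simp add: mult_le_0_iff antisym)
  qed
  then show ?thesis unfolding E_def by (simp add: add_nonneg_eq_0_iff)
qed

end



context sturm
begin

lemma simple_zero:
  assumes "x0 > 0" "u x0 = 0" "y > 0" "u y \<noteq> 0"
  shows "u1 x0 \<noteq> 0"
  using uniq assms by blast

lemma sign_const:
  assumes a: "0 < a" and nz: "\<And>t. a < t \<Longrightarrow> t < b \<Longrightarrow> u t \<noteq> 0"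
  shows "(\<forall>t. a < t \<and> t < b \<longrightarrow> u t > 0) \<or> (\<forall>t. a < t \<and> t < b \<longrightarrow> u t < 0)"
proof (rule ccontr)
  assume "\<not> ?thesis"
  then obtain t1 t2 where t: "a < t1" "t1 < b" "a < t2" "t2 < b" "u t1 \<le> 0" "u t2 \<ge> 0"
    by (auto simp: not_less)
  have t1: "u t1 < 0" and t2: "u t2 > 0" using t nz[of t1] nz[of t2] by auto
  show False
  proof (cases "t1 \<le> t2")
    case True
    obtain x where "t1 \<le> x" "x \<le> t2" "u x = 0"
      using IVT[of u t1 0 t2] t1 t2 True a t contu by (auto intro!: contu)
    then show False using nz[of x] t by auto
  next
    case False
    obtain x where "t2 \<le> x" "x \<le> t1" "u x = 0"
      using IVT2[of u t1 0 t2] t1 t2 False a t contu by (auto intro!: contu)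
    then show False using nz[of x] t by auto
  qed
qed

lemma gap_pos:
  assumes c: "c \<ge> 0" and ab: "0 < a" "a < b" and z: "u a = 0" "u b = 0"
    and pos: "\<And>t. a < t \<Longrightarrow> t < b \<Longrightarrow> u t > 0"
    and short: "b - a < pi"
  shows False
proof -
  define dl where "dl = (pi - (b - a)) / 2"
  have dl: "dl > 0" using short by (simp add: dl_def)
  define s where "s = a - dl"
  have sinpos: "sin (t - s) > 0" if "a \<le> t" "t \<le> b" for t
  proof -
    have e1: "t - s = (t - a) + dl" by (simp add: s_def)
    have e2: "(b - a) + dl < pi" using short unfolding dl_def by (simp add: field_simps)
    show ?thesis using e1 e2 that dl by (intro sin_gt_zero) linarith+
  qed
  define W where "W t = u1 t * sin (t - s) - u t * cos (t - s)" for t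
  define W' where "W' t = (c / t^2) * u t * sin (t - s)" for t
  have dW: "(W has_real_derivative W' t) (at t)" if "t > 0" for t
  proof -
    have "(W has_real_derivative (-(1 - c/t^2) * u t) * sin (t - s) + u1 t * (cos (t - s) * (1 - 0))
        - (u1 t * cos (t - s) + u t * (- sin (t - s) * (1 - 0)))) (at t)"
      unfolding W_def[abs_def] by (rule derivative_eq_intros D1 D2 that refl)+ (simp add: algebra_simps)
    moreover have "(-(1 - c/t^2) * u t) * sin (t - s) + u1 t * (cos (t - s) * (1 - 0))
        - (u1 t * cos (t - s) + u t * (- sin (t - s) * (1 - 0))) = W' t"
      unfolding W'_def using that by (simp add: field_simps)
    ultimately show ?thesis by simp
  qed
  have "W a \<le> W b"
  proof (rule incr_deriv[where f=W and f'=W' and a=a and b=b])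
    show "a \<le> b" using ab by simp
    show "(W has_real_derivative W' t) (at t)" if "a \<le> t" "t \<le> b" for t
      using that ab by (intro dW) simp
    show "0 \<le> W' t" if "a < t" "t < b" for t
      unfolding W'_def using c pos[OF that] sinpos[of t] that by (simp add: less_imp_le)
  qed
  then have le: "u1 a * sin (a - s) \<le> u1 b * sin (b - s)" unfolding W_def using z by simp
  have ua: "u1 a \<ge> 0"
  proof (rule ccontr)
    assume "\<not> u1 a \<ge> 0"
    then obtain d where d: "d > 0" "\<And>h. h > 0 \<Longrightarrow> h < d \<Longrightarrow> u a > u (a + h)"
      using DERIV_neg_dec_right[OF D1[OF ab(1)]] by force
    define h where "h = min (d/2) ((b - a)/2)"
    have h1: "h \<le> d/2" unfolding h_def by (rule min.cobounded1)
    have h2: "h \<le> (b - a)/2" unfolding h_def by (rule min.cobounded2)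
    have h0: "0 < h" using d ab by (simp add: h_def)
    have h: "0 < h" "h < d" "h \<le> (b - a)/2" using h0 h1 h2 d by linarith+
    have A: "u a > u (a + h)" using h by (intro d(2))
    have "2 * h \<le> b - a" using h(3) by simp
    then have "a + h < b" "a < a + h" using h(1) by linarith+
    then have "u (a + h) > 0" by (intro pos)
    then show False using z A by simp
  qed
  have ub: "u1 b \<le> 0"
  proof (rule ccontr)
    assume "\<not> u1 b \<le> 0"
    then obtain d where d: "d > 0" "\<And>h. h > 0 \<Longrightarrow> h < d \<Longrightarrow> u (b - h) < u b"
      using DERIV_pos_inc_left[OF D1[of b]] ab by force
    define h where "h = min (d/2) ((b - a)/2)"
    have h1: "h \<le> d/2" unfolding h_def by (rule min.cobounded1)
    have h2: "h \<le> (b - a)/2" unfolding h_def by (rule min.cobounded2)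
    have h0: "0 < h" using d ab by (simp add: h_def)
    have h: "0 < h" "h < d" "h \<le> (b - a)/2" using h0 h1 h2 d by linarith+
    have A: "u (b - h) < u b" using h by (intro d(2))
    have "2 * h \<le> b - a" using h(3) by simp
    then have "a < b - h" "b - h < b" using h(1) by linarith+
    then have "u (b - h) > 0" by (intro pos)
    then show False using z A by simp
  qed
  have sa: "sin (a - s) > 0" and sb: "sin (b - s) > 0" using sinpos ab by auto
  have "u1 a * sin (a - s) \<ge> 0" using ua sa by simp
  moreover have "u1 b * sin (b - s) \<le> 0" using ub sb by (simp add: mult_nonpos_nonneg)
  ultimately have "u1 a * sin (a - s) = 0" using le by linarith
  then have "u1 a = 0" using sa by simp
  moreover have "u ((a + b)/2) \<noteq> 0" using pos[of "(a+b)/2"] ab by simp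
  ultimately show False using simple_zero[of a "(a+b)/2"] ab z by simp
qed

lemma osc_pos:
  assumes w: "w > 0" and s: "s > 0"
    and q: "\<And>t. s \<le> t \<Longrightarrow> t \<le> s + pi / w \<Longrightarrow> 1 - c / t^2 > w^2"
    and pos: "\<And>t. s < t \<Longrightarrow> t < s + pi / w \<Longrightarrow> u t > 0"
  shows False
proof -
  define e where "e = s + pi / w"
  have se: "s < e" using w by (simp add: e_def)
  define m where "m = s + pi / (2 * w)"
  have m: "s < m" "m < e" using w by (auto simp: m_def e_def field_simps)
  have um: "u m > 0" using pos m by (simp add: e_def)
  define W where "W t = w * cos (w * (t - s)) * u t - sin (w * (t - s)) * u1 t" for t
  define W' where "W' t = ((1 - c / t^2) - w^2) * sin (w * (t - s)) * u t" for t
  have dW: "(W has_real_derivative W' t) (at t)" if "t > 0" for t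
  proof -
    have "(W has_real_derivative w * (- sin (w * (t - s)) * (w * (1 - 0))) * u t + w * cos (w * (t - s)) * u1 t
        - (cos (w * (t - s)) * (w * (1 - 0)) * u1 t + sin (w * (t - s)) * (-(1 - c/t^2) * u t))) (at t)"
      unfolding W_def[abs_def]
      by (rule derivative_eq_intros D1 D2 that refl)+ (simp add: algebra_simps)
    moreover have "w * (- sin (w * (t - s)) * (w * (1 - 0))) * u t + w * cos (w * (t - s)) * u1 t
        - (cos (w * (t - s)) * (w * (1 - 0)) * u1 t + sin (w * (t - s)) * (-(1 - c/t^2) * u t)) = W' t"
      unfolding W'_def by (simp add: algebra_simps power2_eq_square)
    ultimately show ?thesis by simp
  qed
  have W'nn: "W' t \<ge> 0" if "s < t" "t < e" for t
  proof -
    have "sin (w * (t - s)) > 0" using that w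
      by (intro sin_gt_zero) (auto simp: e_def field_simps)
    moreover have "1 - c / t^2 - w^2 > 0" using q[of t] that by (simp add: e_def)
    ultimately show ?thesis unfolding W'_def using pos[of t] that by (simp add: e_def)
  qed
  have mono: "W x \<le> W y" if "s \<le> x" "x \<le> y" "y \<le> e" for x y
    by (rule incr_deriv[where f=W and f'=W' and a=x and b=y]) (use that s W'nn in \<open>auto intro!: dW\<close>)
  have us: "u s \<ge> 0"
  proof (rule ccontr)
    assume "\<not> u s \<ge> 0"
    then obtain x where "s \<le> x" "x \<le> m" "u x = 0"
      using IVT[of u s 0 m] um m s contu \<open>\<not> u s \<ge> 0\<close> by force
    then show False using pos[of x] m um \<open>\<not> u s \<ge> 0\<close> by (cases "x = s") (auto simp: e_def)
  qed
  have ue: "u e \<ge> 0"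
  proof (rule ccontr)
    assume "\<not> u e \<ge> 0"
    then obtain x where "m \<le> x" "x \<le> e" "u x = 0"
      using IVT2[of u e 0 m] um m s contu \<open>\<not> u e \<ge> 0\<close> by force
    then show False using pos[of x] m um \<open>\<not> u e \<ge> 0\<close> by (cases "x = e") (auto simp: e_def)
  qed
  have Ws: "W s = w * u s" unfolding W_def by simp
  have We: "W e = - w * u e"
  proof -
    have "w * (e - s) = pi" using w by (simp add: e_def)
    then show ?thesis unfolding W_def by simp
  qed
  have "W s \<le> W e" using mono[of s e] se by simp
  then have "w * u s \<le> - w * u e" using Ws We by simp
  moreover have "w * u s \<ge> 0" "w * u e \<ge> 0" using us ue w by simp_all
  ultimately have "w * u s = 0" "w * u e = 0" by linarith+
  then have "u s = 0 \<and> u e = 0" using w by simp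
  then have W0: "W s = 0" "W e = 0" using Ws We by auto
  have Wz: "W t = 0" if "s \<le> t" "t \<le> e" for t
    using mono[of s t] mono[of t e] that W0 by simp
  have "W' m = 0"
  proof (rule DERIV_local_const[OF dW])
    show "m > 0" using m s by simp
    show "pi / (2 * w) > 0" using w by simp
    show "\<forall>y. \<bar>m - y\<bar> < pi / (2 * w) \<longrightarrow> W m = W y"
    proof (intro allI impI)
      fix y assume "\<bar>m - y\<bar> < pi / (2 * w)"
      then have "s \<le> y" "y \<le> e" using w by (auto simp: m_def e_def field_simps abs_less_iff)
      then show "W m = W y" using Wz[of y] Wz[of m] m by simp
    qed
  qed
  moreover have "W' m > 0"
  proof -
    have h: "w * (m - s) = pi / 2" using w by (simp add: m_def)
    have "sin (w * (m - s)) = 1" by (simp only: h sin_pi_half)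
    moreover have "1 - c / m^2 - w^2 > 0" using q[of m] m by (simp add: e_def)
    ultimately show ?thesis unfolding W'_def using um by simp
  qed
  ultimately show False by simp
qed

end



context sturm
begin

lemma gap:
  assumes c: "c \<ge> 0" and ab: "0 < a" "a < b" and z: "u a = 0" "u b = 0"
    and nz: "\<And>t. a < t \<Longrightarrow> t < b \<Longrightarrow> u t \<noteq> 0"
  shows "b - a \<ge> pi"
proof (rule ccontr)
  assume sh: "\<not> b - a \<ge> pi"
  interpret N: sturm "\<lambda>x. - u x" "\<lambda>x. - u1 x" c by (rule neg)
  from sign_const[OF ab(1) nz] show False
  proof
    assume "\<forall>t. a < t \<and> t < b \<longrightarrow> u t > 0"
    then show False using gap_pos[OF c ab z] sh by auto
  next
    assume "\<forall>t. a < t \<and> t < b \<longrightarrow> u t < 0"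
    then show False using N.gap_pos[OF c ab] z sh by auto
  qed
qed

lemma osc:
  assumes w: "w > 0" and s: "s > 0"
    and q: "\<And>t. s \<le> t \<Longrightarrow> t \<le> s + pi / w \<Longrightarrow> 1 - c / t^2 > w^2"
  shows "\<exists>t. s < t \<and> t < s + pi / w \<and> u t = 0"
proof (rule ccontr)
  assume "\<not> ?thesis"
  then have nz: "\<And>t. s < t \<Longrightarrow> t < s + pi / w \<Longrightarrow> u t \<noteq> 0" by auto
  interpret N: sturm "\<lambda>x. - u x" "\<lambda>x. - u1 x" c by (rule neg)
  from sign_const[OF s nz] show False
  proof
    assume "\<forall>t. s < t \<and> t < s + pi / w \<longrightarrow> u t > 0"
    then show False using osc_pos[OF w s q] by auto
  next
    assume "\<forall>t. s < t \<and> t < s + pi / w \<longrightarrow> u t < 0"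
    then show False using N.osc_pos[OF w s q] by auto
  qed
qed

lemma first_zero:
  assumes z: "z > 0" "z^2 \<le> c" "u z = 0" and pos: "\<And>t. 0 < t \<Longrightarrow> t < z \<Longrightarrow> u t > 0"
    and lim: "(u \<longlongrightarrow> 0) (at_right 0)"
  shows False
proof -
  have u1mono: "u1 t1 \<le> u1 t2" if "0 < t1" "t1 \<le> t2" "t2 < z" for t1 t2
  proof (rule incr_deriv[where f=u1 and f'="\<lambda>t. -(1 - c/t^2) * u t" and a=t1 and b=t2])
    show "t1 \<le> t2" by fact
    show "(u1 has_real_derivative -(1 - c/t^2) * u t) (at t)" if "t1 \<le> t" "t \<le> t2" for t
      using that \<open>0 < t1\<close> by (intro D2) simp
    show "0 \<le> -(1 - c/t^2) * u t" if "t1 < t" "t < t2" for t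
    proof -
      have t: "0 < t" "t < z" using that \<open>0 < t1\<close> \<open>t2 < z\<close> by auto
      have "t^2 \<le> z^2" using t by (intro power_mono) auto
      then have "t^2 \<le> c" using z by simp
      then have "1 \<le> c / t^2" using t by simp
      then show ?thesis using pos[OF t] by simp
    qed
  qed
  have hz: "0 < z/2" "z/2 < z" using z by auto
  have "\<exists>xi. z/2 < xi \<and> xi < z \<and> u z - u (z/2) = (z - z/2) * u1 xi"
  proof (rule MVT2)
    show "z/2 < z" by fact
    fix x assume "z/2 \<le> x" "x \<le> z"
    then show "(u has_real_derivative u1 x) (at x)" using hz by (intro D1) simp
  qed
  then obtain xi where xi: "z/2 < xi" "xi < z" "u z - u (z/2) = (z - z/2) * u1 xi" by blast
  have uh: "u (z/2) > 0" using pos hz by simp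
  have u1xi: "u1 xi < 0"
  proof -
    have "(z - z/2) * u1 xi < 0" using xi(3) z(3) uh by simp
    then show ?thesis using hz by (simp add: mult_less_0_iff)
  qed
  have ge: "u t \<ge> u (z/2)" if "0 < t" "t \<le> z/2" for t
  proof (rule decr_deriv[where f=u and f'=u1 and a=t and b="z/2"])
    show "t \<le> z/2" by fact
    show "(u has_real_derivative u1 r) (at r)" if "t \<le> r" "r \<le> z/2" for r
      using that \<open>0 < t\<close> by (intro D1) simp
    show "u1 r \<le> 0" if "t < r" "r < z/2" for r
      using u1mono[of r xi] that \<open>0 < t\<close> xi u1xi by simp
  qed
  have "eventually (\<lambda>t. u t < u (z/2)) (at_right 0)"
    using order_tendstoD(2)[OF lim uh] .
  then obtain b where b: "b > 0" "\<And>t. 0 < t \<Longrightarrow> t < b \<Longrightarrow> u t < u (z/2)"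
    unfolding eventually_at_right_field by auto
  define t where "t = min (b/2) (z/2)"
  have t1: "t \<le> b/2" unfolding t_def by (rule min.cobounded1)
  have t2: "t \<le> z/2" unfolding t_def by (rule min.cobounded2)
  have t0: "0 < t" using b z by (simp add: t_def)
  have "u t < u (z/2)" using t0 t1 b by (intro b(2)) auto
  moreover have "u t \<ge> u (z/2)" using ge t0 t2 by simp
  ultimately show False by simp
qed

end

lemma sturm_bessel: "nu \<ge> 0 \<Longrightarrow> sturm (uu nu) (uu1 nu) (nu^2 - 1/4)"
proof unfold_locales
  fix x :: real assume nu: "nu \<ge> 0" and x: "x > 0"
  show "(uu nu has_real_derivative uu1 nu x) (at x)" by (rule uu_deriv[OF nu x])
  show "(uu1 nu has_real_derivative -(1 - (nu^2 - 1/4)/x^2) * uu nu x) (at x)"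
    using uu1_deriv[OF nu x] unfolding qq_def .
qed

lemma uu_pos: "nu \<ge> 0 \<Longrightarrow> 0 < t \<Longrightarrow> t < 2 \<Longrightarrow> uu nu t > 0"
  unfolding uu_def using FF_pos by simp

lemma uu_lim: "nu \<ge> 0 \<Longrightarrow> (uu nu \<longlongrightarrow> 0) (at_right 0)"
proof -
  assume nu: "nu \<ge> 0"
  have "((\<lambda>t. t powr (nu + 1/2)) \<longlongrightarrow> 0) (at_right 0)"
    by (rule tendsto_zero_powrI) (use nu in \<open>auto intro: tendsto_ident_at eventually_at_rightI[of 0 1]\<close>)
  moreover have "(FF nu \<longlongrightarrow> FF nu 0) (at_right 0)"
    using FF_cont[OF nu, of 0] by (simp add: isCont_def filterlim_at_split)
  ultimately have "((\<lambda>t. t powr (nu + 1/2) * FF nu t) \<longlongrightarrow> 0 * FF nu 0) (at_right 0)"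
    by (rule tendsto_mult)
  then show ?thesis unfolding uu_def[abs_def] by simp
qed



definition below :: "(real \<Rightarrow> bool) \<Rightarrow> real \<Rightarrow> real set" where
  "below P x = {y. 0 < y \<and> y < x \<and> P y}"

definition e :: "(real \<Rightarrow> bool) \<Rightarrow> nat \<Rightarrow> real" where
  "e P m = (THE x. 0 < x \<and> P x \<and> card (below P x) = m - 1)"

locale enum =
  fixes P :: "real \<Rightarrow> bool"
  assumes fin: "\<And>x. finite (below P x)"
  and unb: "\<And>X. \<exists>z. z > X \<and> P z"
begin

lemma below_mono: "x \<le> x' \<Longrightarrow> below P x \<subseteq> below P x'"
  by (auto simp: below_def)

lemma ex_first: "\<exists>x. 0 < x \<and> P x \<and> card (below P x) = 0"
proof -
  obtain z where z: "z > 0" "P z" using unb[of 0] by auto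
  define S where "S = {y. 0 < y \<and> P y \<and> y < z + 1}"
  have S: "finite S" "S \<noteq> {}" using fin[of "z+1"] z by (auto simp: S_def below_def conj_commute)
  define x where "x = Min S"
  have xS: "x \<in> S" unfolding x_def using S by (rule Min_in)
  have "below P x = {}"
  proof (rule ccontr)
    assume "below P x \<noteq> {}"
    then obtain y where y: "0 < y" "y < x" "P y" by (auto simp: below_def)
    then have "y \<in> S" using xS by (auto simp: S_def)
    then have "x \<le> y" unfolding x_def using S by simp
    then show False using y by simp
  qed
  then show ?thesis using xS by (auto simp: S_def)
qed

lemma ex_next:
  assumes "0 < x" "P x"
  shows "\<exists>x'. x < x' \<and> P x' \<and> below P x' = insert x (below P x)"
proof -
  obtain z where z: "z > x" "P z" using unb[of x] by auto
  define S where "S = {y. x < y \<and> P y \<and> y < z + 1}"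
  have "S \<subseteq> below P (z+1)" using assms by (auto simp: S_def below_def)
  then have S: "finite S" "S \<noteq> {}" using fin[of "z+1"] z by (auto intro: finite_subset simp: S_def)
  define x' where "x' = Min S"
  have xS: "x' \<in> S" unfolding x'_def using S by (rule Min_in)
  have "below P x' = insert x (below P x)"
  proof
    show "below P x' \<subseteq> insert x (below P x)"
    proof
      fix y assume "y \<in> below P x'"
      then have y: "0 < y" "y < x'" "P y" by (auto simp: below_def)
      show "y \<in> insert x (below P x)"
      proof (cases "y \<le> x")
        case True then show ?thesis using y by (auto simp: below_def)
      next
        case False
        then have "y \<in> S" using xS y by (auto simp: S_def)
        then have "x' \<le> y" unfolding x'_def using S by simp
        then show ?thesis using y by simp
      qed
    qed
    show "insert x (below P x) \<subseteq> below P x'" using xS assms by (auto simp: below_def S_def)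
  qed
  then show ?thesis using xS by (auto simp: S_def)
qed

lemma ex_m: "m \<ge> 1 \<Longrightarrow> \<exists>x. 0 < x \<and> P x \<and> card (below P x) = m - 1"
proof (induction m rule: dec_induct)
  case base then show ?case using ex_first by simp
next
  case (step m)
  then obtain x where x: "0 < x" "P x" "card (below P x) = m - 1" by auto
  obtain x' where x': "x < x'" "P x'" "below P x' = insert x (below P x)" using ex_next[OF x(1,2)] by auto
  have "x \<notin> below P x" by (auto simp: below_def)
  then have "card (below P x') = Suc (m - 1)" using x' x fin by simp
  then have "card (below P x') = m" using step(1) by simp
  then show ?case using x' x(1) by (intro exI[of _ x']) simp
qed

lemma card_strict: "0 < x \<Longrightarrow> P x \<Longrightarrow> x < x' \<Longrightarrow> card (below P x) < card (below P x')"
proof -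
  assume a: "0 < x" "P x" "x < x'"
  have "insert x (below P x) \<subseteq> below P x'" using a by (auto simp: below_def)
  moreover have "x \<notin> below P x" by (auto simp: below_def)
  ultimately show ?thesis using fin[of x] fin[of x']
    by (metis card_insert_disjoint card_mono Suc_le_eq)
qed

lemma ex1_m: "m \<ge> 1 \<Longrightarrow> \<exists>!x. 0 < x \<and> P x \<and> card (below P x) = m - 1"
proof -
  assume m: "m \<ge> 1"
  obtain x where x: "0 < x" "P x" "card (below P x) = m - 1" using ex_m[OF m] by auto
  show ?thesis
  proof (rule ex1I[of _ x])
    show "0 < x \<and> P x \<and> card (below P x) = m - 1" using x by simp
    fix y assume y: "0 < y \<and> P y \<and> card (below P y) = m - 1"
    show "y = x"
    proof (rule ccontr)
      assume "y \<noteq> x"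
      then consider "y < x" | "x < y" by linarith
      then show False
      proof cases
        case 1 then show False using card_strict[of y x] x y by simp
      next
        case 2 then show False using card_strict[of x y] x y by simp
      qed
    qed
  qed
qed

lemma e_prop: "m \<ge> 1 \<Longrightarrow> 0 < e P m \<and> P (e P m) \<and> card (below P (e P m)) = m - 1"
  unfolding e_def by (rule theI') (rule ex1_m)

lemma e_lt: "m \<ge> 1 \<Longrightarrow> card (below P t) \<ge> m \<Longrightarrow> e P m < t"
proof (rule ccontr)
  assume m: "m \<ge> 1" "card (below P t) \<ge> m" "\<not> e P m < t"
  then have "below P t \<subseteq> below P (e P m)" by (intro below_mono) simp
  then have "card (below P t) \<le> card (below P (e P m))" using fin by (rule card_mono[rotated])
  then show False using e_prop[OF m(1)] m by simp
qed

lemma e_mono: "m \<ge> 1 \<Longrightarrow> e P m < e P (Suc m)"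
proof -
  assume m: "m \<ge> 1"
  have "card (below P (e P (Suc m))) = m" using e_prop[of "Suc m"] by simp
  then show ?thesis using e_lt[OF m, of "e P (Suc m)"] by simp
qed

lemma e_consec: "m \<ge> 1 \<Longrightarrow> e P m < y \<Longrightarrow> y < e P (Suc m) \<Longrightarrow> \<not> P y"
proof
  assume m: "m \<ge> 1" "e P m < y" "y < e P (Suc m)" "P y"
  have "e P m > 0" using e_prop[OF m(1)] by simp
  then have A: "card (below P (e P m)) < card (below P y)" using card_strict[of "e P m" y] e_prop[OF m(1)] m by simp
  have B: "card (below P y) < card (below P (e P (Suc m)))" using card_strict[of y] m \<open>e P m > 0\<close> by auto
  have "card (below P (e P m)) = m - 1" "card (below P (e P (Suc m))) = m"
    using e_prop[OF m(1)] e_prop[of "Suc m"] by simp_all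
  then show False using A B m(1) by linarith
qed

lemma e_first: "0 < y \<Longrightarrow> y < e P 1 \<Longrightarrow> \<not> P y"
proof
  assume y: "0 < y" "y < e P 1" "P y"
  then have "y \<in> below P (e P 1)" by (simp add: below_def)
  then have "below P (e P 1) \<noteq> {}" by auto
  then show False using e_prop[of 1] fin[of "e P 1"] by simp
qed

end



lemma uu_zero_iff: "nu \<ge> 0 \<Longrightarrow> 0 < y \<Longrightarrow> bessel_J nu y = 0 \<longleftrightarrow> uu nu y = 0"
  by (rule J_zero_iff)

lemma fin_zeros:
  assumes nu: "nu \<ge> 0"
  shows "finite {y. 0 < y \<and> y < x \<and> bessel_J nu y = 0}"
proof (rule ccontr)
  interpret S: sturm "uu nu" "uu1 nu" "nu^2 - 1/4" by (rule sturm_bessel[OF nu])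
  define T where "T = {y. 0 < y \<and> y < x \<and> bessel_J nu y = 0}"
  assume inf: "infinite {y. 0 < y \<and> y < x \<and> bessel_J nu y = 0}"
  have TS: "T \<subseteq> {2..x}"
  proof
    fix y assume "y \<in> T"
    then have y: "0 < y" "y < x" "uu nu y = 0" using uu_zero_iff[OF nu] by (auto simp: T_def)
    then have "\<not> y < 2" using uu_pos[OF nu, of y] by auto
    then show "y \<in> {2..x}" using y by simp
  qed
  obtain z where z: "z \<in> {2..x}" "z islimpt T"
    using Heine_Borel_imp_Bolzano_Weierstrass[of "{2..x}" T] inf TS by (auto simp: T_def)
  define Z where "Z = {y \<in> {1..x+1}. uu nu y = 0}"
  have "closed Z" unfolding Z_def
    by (intro continuous_closed_preimage_constant closed_atLeastAtMost S.contu_on) simp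
  moreover have "T \<subseteq> Z" using TS uu_zero_iff[OF nu] by (auto simp: T_def Z_def)
  ultimately have "z \<in> Z" using z(2) closed_limpt islimpt_subset by blast
  then have uz: "uu nu z = 0" by (simp add: Z_def)
  have z0: "z > 0" using z by simp
  have "uu nu 1 > 0" using uu_pos[OF nu, of 1] by simp
  then have u1z: "uu1 nu z \<noteq> 0" using S.simple_zero[OF z0 uz, of 1] by simp
  have "\<exists>d>0. \<forall>h. 0 < h \<and> h < d \<longrightarrow> uu nu (z + h) \<noteq> 0 \<and> uu nu (z - h) \<noteq> 0"
  proof (cases "uu1 nu z > 0")
    case True
    obtain d1 where d1: "d1 > 0" "\<And>h. h > 0 \<Longrightarrow> h < d1 \<Longrightarrow> uu nu z < uu nu (z + h)"
      using DERIV_pos_inc_right[OF S.D1[OF z0] True] by auto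
    obtain d2 where d2: "d2 > 0" "\<And>h. h > 0 \<Longrightarrow> h < d2 \<Longrightarrow> uu nu (z - h) < uu nu z"
      using DERIV_pos_inc_left[OF S.D1[OF z0] True] by auto
    show ?thesis using d1 d2 uz by (intro exI[of _ "min d1 d2"]) force
  next
    case False
    then have neg: "uu1 nu z < 0" using u1z by simp
    obtain d1 where d1: "d1 > 0" "\<And>h. h > 0 \<Longrightarrow> h < d1 \<Longrightarrow> uu nu z > uu nu (z + h)"
      using DERIV_neg_dec_right[OF S.D1[OF z0] neg] by auto
    obtain d2 where d2: "d2 > 0" "\<And>h. h > 0 \<Longrightarrow> h < d2 \<Longrightarrow> uu nu (z - h) > uu nu z"
      using DERIV_neg_dec_left[OF S.D1[OF z0] neg] by auto
    show ?thesis using d1 d2 uz by (intro exI[of _ "min d1 d2"]) force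
  qed
  then obtain d where d: "d > 0" "\<And>h. 0 < h \<Longrightarrow> h < d \<Longrightarrow> uu nu (z + h) \<noteq> 0 \<and> uu nu (z - h) \<noteq> 0"
    by auto
  obtain y where y: "y \<in> T" "y \<noteq> z" "dist y z < d"
    using z(2) d(1) unfolding islimpt_approachable by blast
  have yz: "uu nu y = 0" using y(1) uu_zero_iff[OF nu] by (auto simp: T_def)
  show False
  proof (cases "y > z")
    case True
    then show False using d(2)[of "y - z"] y yz by (auto simp: dist_real_def)
  next
    case False
    then have "y < z" using y(2) by simp
    then show False using d(2)[of "z - y"] y yz by (auto simp: dist_real_def)
  qed
qed

lemma osc_bessel:
  assumes nu: "nu \<ge> 0" and w: "0 < w" "w < 1" and s: "s \<ge> 1" "s > \<bar>nu^2 - 1/4\<bar> / (1 - w^2)"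
  shows "\<exists>t. s < t \<and> t < s + pi / w \<and> bessel_J nu t = 0"
proof -
  interpret S: sturm "uu nu" "uu1 nu" "nu^2 - 1/4" by (rule sturm_bessel[OF nu])
  have w2: "w^2 < 1" using w by (simp add: power_less_one_iff)
  have "\<exists>t. s < t \<and> t < s + pi / w \<and> uu nu t = 0"
  proof (rule S.osc[OF w(1)])
    show "s > 0" using s by simp
    fix t assume t: "s \<le> t" "t \<le> s + pi / w"
    define c where "c = nu^2 - 1/4"
    have t1: "t \<ge> 1" using t s by simp
    have "\<bar>c\<bar> < (1 - w^2) * t"
    proof -
      have "s * (1 - w^2) \<le> t * (1 - w^2)" using t w2 by (intro mult_right_mono) auto
      moreover have "\<bar>c\<bar> < s * (1 - w^2)" using s(2) w2 unfolding c_def by (simp add: divide_less_eq)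
      ultimately have "\<bar>c\<bar> < t * (1 - w^2)" by linarith
      then show ?thesis by (simp add: mult.commute)
    qed
    then have "\<bar>c\<bar> / t < 1 - w^2" using t1 by (simp add: divide_less_eq)
    moreover have "\<bar>c\<bar> / t^2 \<le> \<bar>c\<bar> / t"
      using t1 by (intro divide_left_mono) (auto simp: power2_eq_square)
    moreover have "c / t^2 \<le> \<bar>c\<bar> / t^2" by (intro divide_right_mono) auto
    ultimately show "1 - (nu^2 - 1/4) / t^2 > w^2" unfolding c_def[symmetric] by linarith
  qed
  then show ?thesis using uu_zero_iff[OF nu] s by force
qed

lemma enum_bessel: "nu \<ge> 0 \<Longrightarrow> enum (\<lambda>y. bessel_J nu y = 0)"
proof unfold_locales
  fix x assume nu: "nu \<ge> 0"
  show "finite (below (\<lambda>y. bessel_J nu y = 0) x)" unfolding below_def by (rule fin_zeros[OF nu])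
next
  fix X assume nu: "nu \<ge> 0"
  define s where "s = max X 1 + \<bar>nu^2 - 1/4\<bar> / (1 - (1/2)^2) + 1"
  have p: "0 \<le> \<bar>nu^2 - 1/4\<bar> / (1 - (1/2::real)^2)" by (intro divide_nonneg_pos) (auto simp: power2_eq_square)
  have "max X 1 \<ge> 1" "max X 1 \<ge> X" by auto
  then have sX: "s \<ge> 1" "s > \<bar>nu^2 - 1/4\<bar> / (1 - (1/2)^2)" "s > X" using p unfolding s_def by linarith+
  then obtain t where t: "s < t" "bessel_J nu t = 0"
    using osc_bessel[OF nu, of "1/2" s] by auto
  show "\<exists>z>X. bessel_J nu z = 0" using sX t by (intro exI[of _ t]) simp
qed

lemma bessel_zero_e: "bessel_zero nu m = e (\<lambda>y. bessel_J nu y = 0) m"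
  by (simp add: bessel_zero_def e_def below_def)



lemma jz: "nu \<ge> 0 \<Longrightarrow> m \<ge> 1 \<Longrightarrow> 0 < bessel_zero nu m \<and> bessel_J nu (bessel_zero nu m) = 0"
proof -
  assume nu: "nu \<ge> 0" and m: "m \<ge> 1"
  interpret E: enum "\<lambda>y. bessel_J nu y = 0" by (rule enum_bessel[OF nu])
  show ?thesis using E.e_prop[OF m] unfolding bessel_zero_e by simp
qed

lemma jmono: "nu \<ge> 0 \<Longrightarrow> m \<ge> 1 \<Longrightarrow> bessel_zero nu m < bessel_zero nu (Suc m)"
proof -
  assume nu: "nu \<ge> 0" and m: "m \<ge> 1"
  interpret E: enum "\<lambda>y. bessel_J nu y = 0" by (rule enum_bessel[OF nu])
  show ?thesis using E.e_mono[OF m] unfolding bessel_zero_e by simp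
qed

lemma j1_ge2: "nu \<ge> 0 \<Longrightarrow> bessel_zero nu 1 \<ge> 2"
proof (rule ccontr)
  assume nu: "nu \<ge> 0" and "\<not> bessel_zero nu 1 \<ge> 2"
  then have "bessel_zero nu 1 < 2" by simp
  moreover have "0 < bessel_zero nu 1" "bessel_J nu (bessel_zero nu 1) = 0" using jz[OF nu, of 1] by auto
  ultimately show False using uu_pos[OF nu] uu_zero_iff[OF nu] by force
qed

lemma jgap:
  assumes nu: "nu \<ge> 1/2" and m: "m \<ge> 1"
  shows "bessel_zero nu (Suc m) - bessel_zero nu m \<ge> pi"
proof -
  have nu0: "nu \<ge> 0" using nu by simp
  interpret E: enum "\<lambda>y. bessel_J nu y = 0" by (rule enum_bessel[OF nu0])
  interpret S: sturm "uu nu" "uu1 nu" "nu^2 - 1/4" by (rule sturm_bessel[OF nu0])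
  have c: "nu^2 - 1/4 \<ge> 0"
  proof -
    have "(1/2)^2 \<le> nu^2" using nu by (intro power_mono) auto
    then show ?thesis by (simp add: power2_eq_square)
  qed
  have a: "0 < bessel_zero nu m" "bessel_J nu (bessel_zero nu m) = 0" using jz[OF nu0 m] by auto
  have b: "bessel_J nu (bessel_zero nu (Suc m)) = 0" using jz[OF nu0, of "Suc m"] by auto
  have lt: "bessel_zero nu m < bessel_zero nu (Suc m)" by (rule jmono[OF nu0 m])
  show ?thesis
  proof (rule S.gap[OF c a(1) lt])
    show "uu nu (bessel_zero nu m) = 0" using a uu_zero_iff[OF nu0] by simp
    show "uu nu (bessel_zero nu (Suc m)) = 0" using b a lt uu_zero_iff[OF nu0] by simp
    fix t assume "bessel_zero nu m < t" "t < bessel_zero nu (Suc m)"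
    then show "uu nu t \<noteq> 0" using E.e_consec[OF m, of t] a uu_zero_iff[OF nu0, of t]
      unfolding bessel_zero_e by simp
  qed
qed

lemma jlow:
  assumes nu: "nu \<ge> 1/2" and m: "m \<ge> 1"
  shows "bessel_zero nu m \<ge> 2 + (real m - 1) * pi"
  using m
proof (induction m rule: dec_induct)
  case base then show ?case using j1_ge2[of nu] nu by simp
next
  case (step m)
  then show ?case using jgap[OF nu step(1)] by (simp add: algebra_simps)
qed

lemma jge1:
  assumes nu: "nu \<ge> 0" and m: "m \<ge> 1"
  shows "bessel_zero nu m \<ge> bessel_zero nu 1"
  using m
proof (induction m rule: dec_induct)
  case base then show ?case by simp
next
  case (step m)
  then show ?case using jmono[OF nu step(1)] by simp
qed

lemma jup:
  assumes nu: "nu \<ge> 0" and w: "0 < w" "w < 1" and X: "X \<ge> 1" "X > \<bar>nu^2 - 1/4\<bar> / (1 - w^2)"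
    and m: "m \<ge> 1"
  shows "bessel_zero nu m < X + real m * pi / w"
proof -
  interpret E: enum "\<lambda>y. bessel_J nu y = 0" by (rule enum_bessel[OF nu])
  define f where "f i = (SOME t. X + real i * pi / w < t \<and> t < X + real (Suc i) * pi / w \<and> bessel_J nu t = 0)" for i
  have f: "X + real i * pi / w < f i \<and> f i < X + real (Suc i) * pi / w \<and> bessel_J nu (f i) = 0" for i
  proof -
    have ip: "0 \<le> real i * pi / w" using w by simp
    have s: "X + real i * pi / w \<ge> 1" "X + real i * pi / w > \<bar>nu^2 - 1/4\<bar> / (1 - w^2)"
      using X ip by linarith+
    have e: "X + real i * pi / w + pi / w = X + real (Suc i) * pi / w" by (simp add: algebra_simps add_divide_distrib)
    show ?thesis unfolding f_def using osc_bessel[OF nu w s] unfolding e by (rule someI_ex)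
  qed
  have fmono: "f i < f i'" if "i < i'" for i i'
  proof -
    have "real (Suc i) \<le> real i'" using that by simp
    then have "real (Suc i) * pi / w \<le> real i' * pi / w"
      using w by (intro divide_right_mono mult_right_mono) auto
    then show ?thesis using f[of i] f[of i'] by linarith
  qed
  have inj: "inj_on f {..<m}"
    unfolding inj_on_def by (metis fmono linorder_neqE_nat less_irrefl)
  have sub: "f ` {..<m} \<subseteq> below (\<lambda>y. bessel_J nu y = 0) (X + real m * pi / w)"
  proof
    fix y assume "y \<in> f ` {..<m}"
    then obtain i where i: "i < m" "y = f i" by auto
    have "real (Suc i) * pi / w \<le> real m * pi / w"
      using i w by (intro divide_right_mono mult_right_mono) auto
    moreover have "0 \<le> real i * pi / w" using w by simp
    ultimately show "y \<in> below (\<lambda>y. bessel_J nu y = 0) (X + real m * pi / w)"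
      using f[of i] i X unfolding below_def by auto
  qed
  have "card (f ` {..<m}) = m" using card_image[OF inj] by simp
  then have "card (below (\<lambda>y. bessel_J nu y = 0) (X + real m * pi / w)) \<ge> m"
    using card_mono[OF E.fin sub] by simp
  then show ?thesis using E.e_lt[OF m] unfolding bessel_zero_e by simp
qed

lemma j1sq:
  assumes nu: "nu \<ge> 0"
  shows "(bessel_zero nu 1)^2 > nu^2 - 1/4"
proof (rule ccontr)
  assume "\<not> ?thesis"
  then have le: "(bessel_zero nu 1)^2 \<le> nu^2 - 1/4" by simp
  interpret E: enum "\<lambda>y. bessel_J nu y = 0" by (rule enum_bessel[OF nu])
  interpret S: sturm "uu nu" "uu1 nu" "nu^2 - 1/4" by (rule sturm_bessel[OF nu])
  define z where "z = bessel_zero nu 1"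
  have z: "0 < z" "bessel_J nu z = 0" using jz[OF nu, of 1] by (auto simp: z_def)
  have nz: "uu nu t \<noteq> 0" if "0 < t" "t < z" for t
    using E.e_first[of t] that uu_zero_iff[OF nu, of t] unfolding z_def bessel_zero_e by simp
  have pos: "uu nu t > 0" if t: "0 < t" "t < z" for t
  proof (rule ccontr)
    assume "\<not> uu nu t > 0"
    then have neg: "uu nu t < 0" using nz[OF t] by simp
    define p where "p = min 1 (t/2)"
    have p: "0 < p" "p < t" "p < 2" using t by (auto simp: p_def)
    have up: "uu nu p > 0" using uu_pos[OF nu p(1) p(3)] .
    obtain x where x: "p \<le> x" "x \<le> t" "uu nu x = 0"
      using IVT2[of "uu nu" t 0 p] neg up p S.contu by force
    then show False using nz[of x] p t by simp
  qed
  show False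
    by (rule S.first_zero[of z]) (use z le pos uu_lim[OF nu] uu_zero_iff[OF nu] in \<open>auto simp: z_def\<close>)
qed



definition Dk :: "nat \<Rightarrow> nat \<Rightarrow> real" where
  "Dk k d = (if d = 2 then 2 * bessel_zero 0 1 + pi * (real k - 1)
     else if odd k then 2 * bessel_zero (real d / 2 - 1) ((k + 1) div 2)
     else bessel_zero (real d / 2 - 1) (k div 2) + bessel_zero (real d / 2 - 1) (k div 2 + 1))"

lemma c_eq: "c_kd k d = (pi * real k)^2 / (Dk k d)^2"
  by (simp add: c_kd_def Dk_def power_mult_distrib)

lemma Dk_odd: "d \<noteq> 2 \<Longrightarrow> odd k \<Longrightarrow> Dk k d = 2 * bessel_zero (real d / 2 - 1) ((k + 1) div 2)"
  unfolding Dk_def by simp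

lemma Dk_even: "d \<noteq> 2 \<Longrightarrow> even k \<Longrightarrow>
   Dk k d = bessel_zero (real d / 2 - 1) (k div 2) + bessel_zero (real d / 2 - 1) (k div 2 + 1)"
  unfolding Dk_def by simp

lemma nu_ge: "d \<ge> 2 \<Longrightarrow> d \<noteq> 2 \<Longrightarrow> real d / 2 - 1 \<ge> 1/2"
proof -
  assume "d \<ge> 2" "d \<noteq> 2"
  then have "real d \<ge> 3" by simp
  then show ?thesis by simp
qed

lemma odd_m: "odd k \<Longrightarrow> (k + 1) div 2 \<ge> 1 \<and> real k = 2 * real ((k + 1) div 2) - 1"
  by (elim oddE) simp

lemma even_m: "even k \<Longrightarrow> k \<ge> 1 \<Longrightarrow> k div 2 \<ge> 1 \<and> real k = 2 * real (k div 2)"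
  by (elim evenE) simp

lemma Dk_low:
  assumes k: "k \<ge> 1" and d: "d \<ge> 2"
  shows "Dk k d > pi * real k"
proof (cases "d = 2")
  case True
  have "bessel_zero 0 1 \<ge> 2" by (rule j1_ge2) simp
  then show ?thesis using True pi_less_4 by (simp add: Dk_def algebra_simps)
next
  case False
  define nu where "nu = real d / 2 - 1"
  have nu: "nu \<ge> 1/2" unfolding nu_def by (rule nu_ge[OF d False])
  show ?thesis
  proof (cases "odd k")
    case True
    define m where "m = (k + 1) div 2"
    have m: "m \<ge> 1" "real k = 2 * real m - 1" using odd_m[OF True] by (simp_all add: m_def)
    have D: "Dk k d = 2 * bessel_zero nu m" unfolding nu_def m_def by (rule Dk_odd[OF False True])
    have j: "bessel_zero nu m \<ge> 2 + (real m - 1) * pi" by (rule jlow[OF nu m(1)])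
    have e1: "(real m - 1) * pi = pi * real m - pi" by (simp add: algebra_simps)
    have "pi * real k = pi * (2 * real m - 1)" using m(2) by simp
    then have e2: "pi * real k = 2 * (pi * real m) - pi" by (simp add: algebra_simps)
    show ?thesis using j e1 e2 D pi_less_4 by linarith
  next
    case False': False
    define m where "m = k div 2"
    have m: "m \<ge> 1" "real k = 2 * real m" using even_m[of k] False' k by (simp_all add: m_def)
    have D: "Dk k d = bessel_zero nu m + bessel_zero nu (m + 1)" unfolding nu_def m_def by (rule Dk_even[OF False]) (use False' in simp)
    have "bessel_zero nu m \<ge> 2 + (real m - 1) * pi" by (rule jlow[OF nu m(1)])
    moreover have "bessel_zero nu (m + 1) \<ge> 2 + (real (m + 1) - 1) * pi" by (rule jlow[OF nu]) simp
    ultimately have "Dk k d \<ge> 4 + (real k - 1) * pi"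
      using m by (simp add: D algebra_simps)
    then show ?thesis using pi_less_4 by (simp add: algebra_simps)
  qed
qed

lemma Dk_up:
  assumes d: "d \<ge> 2" and w: "0 < w" "w < 1"
  shows "\<exists>B\<ge>0. \<forall>k\<ge>1. Dk k d \<le> pi * real k / w + B"
proof (cases "d = 2")
  case True
  show ?thesis
  proof (intro exI[of _ "\<bar>2 * bessel_zero 0 1 - pi\<bar>"] conjI allI impI)
    fix k :: nat assume "k \<ge> 1"
    have "pi * real k \<le> pi * real k / w" using w by (simp add: divide_simps mult_left_le)
    then show "Dk k d \<le> pi * real k / w + \<bar>2 * bessel_zero 0 1 - pi\<bar>"
      using True by (simp add: Dk_def algebra_simps)
  qed simp
next
  case False
  define nu where "nu = real d / 2 - 1"
  have nu: "nu \<ge> 1/2" unfolding nu_def by (rule nu_ge[OF d False])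
  then have nu0: "nu \<ge> 0" by simp
  define X where "X = \<bar>nu^2 - 1/4\<bar> / (1 - w^2) + 1"
  have w2: "w^2 < 1" using w by (simp add: power_less_one_iff)
  have X: "X \<ge> 1" "X > \<bar>nu^2 - 1/4\<bar> / (1 - w^2)" unfolding X_def using w2 by auto
  show ?thesis
  proof (intro exI[of _ "2 * X + pi / w"] conjI allI impI)
    show "0 \<le> 2 * X + pi / w" using X w by simp
    fix k :: nat assume k: "k \<ge> 1"
    show "Dk k d \<le> pi * real k / w + (2 * X + pi / w)"
    proof (cases "odd k")
      case True
      define m where "m = (k + 1) div 2"
      have m: "m \<ge> 1" "real k = 2 * real m - 1" using odd_m[OF True] by (simp_all add: m_def)
    have D: "Dk k d = 2 * bessel_zero nu m" unfolding nu_def m_def by (rule Dk_odd[OF False True])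
      have "bessel_zero nu m < X + real m * pi / w" by (rule jup[OF nu0 w X m(1)])
      then have "Dk k d < 2 * X + 2 * real m * pi / w"
        by (simp add: D)
      also have "2 * real m * pi / w = (real k + 1) * pi / w" using m(2) by simp
      also have "\<dots> = pi * real k / w + pi / w" by (simp add: algebra_simps add_divide_distrib)
      finally show ?thesis by simp
    next
      case False': False
      define m where "m = k div 2"
      have m: "m \<ge> 1" "real k = 2 * real m" using even_m[of k] False' k by (simp_all add: m_def)
    have D: "Dk k d = bessel_zero nu m + bessel_zero nu (m + 1)" unfolding nu_def m_def by (rule Dk_even[OF False]) (use False' in simp)
      have a: "bessel_zero nu m < X + real m * pi / w" by (rule jup[OF nu0 w X m(1)])
      have b: "bessel_zero nu (m + 1) < X + real (m + 1) * pi / w" by (rule jup[OF nu0 w X]) simp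
      have c: "real (m + 1) * pi / w = real m * pi / w + pi / w" by (simp add: algebra_simps add_divide_distrib)
      have e: "pi * real k / w = 2 * (real m * pi / w)" using m(2) by simp
      show ?thesis using a b c e D by linarith
    qed
  qed
qed

lemma Dk_big:
  assumes k: "k \<ge> 1" and d: "d \<ge> 2" "d \<noteq> 2"
  shows "Dk k d \<ge> 2 * bessel_zero (real d / 2 - 1) 1"
proof -
  define nu where "nu = real d / 2 - 1"
  have nu: "nu \<ge> 1/2" unfolding nu_def by (rule nu_ge[OF d])
  then have nu0: "nu \<ge> 0" by simp
  show ?thesis
  proof (cases "odd k")
    case True
    define m where "m = (k + 1) div 2"
    have m: "m \<ge> 1" using odd_m[OF True] by (simp add: m_def)
    have D: "Dk k d = 2 * bessel_zero nu m" unfolding nu_def m_def by (rule Dk_odd[OF d(2) True])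
    show ?thesis using jge1[OF nu0 m] unfolding D nu_def by simp
  next
    case False
    define m where "m = k div 2"
    have m: "m \<ge> 1" using even_m[of k] False k by (simp add: m_def)
    have D: "Dk k d = bessel_zero nu m + bessel_zero nu (m + 1)" unfolding nu_def m_def by (rule Dk_even[OF d(2)]) (use False in simp)
    show ?thesis using jge1[OF nu0 m] jge1[OF nu0, of "m+1"] unfolding D nu_def by simp
  qed
qed

lemma j1_big:
  assumes d: "d \<ge> 2" "d \<noteq> 2"
  shows "(2 * bessel_zero (real d / 2 - 1) 1)^2 \<ge> (real d)^2 / 16"
proof -
  define nu where "nu = real d / 2 - 1"
  have nu0: "nu \<ge> 0" unfolding nu_def using nu_ge[OF d] by simp
  define j where "j = bessel_zero nu 1"
  have j2: "j \<ge> 2" unfolding j_def by (rule j1_ge2[OF nu0])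
  have jc: "j^2 > nu^2 - 1/4" unfolding j_def by (rule j1sq[OF nu0])
  have e: "4 * (nu^2 - 1/4) = (real d - 1) * (real d - 3)" unfolding nu_def by (simp add: algebra_simps power2_eq_square)
  have "(2 * j)^2 \<ge> (real d)^2 / 16"
  proof (cases "real d \<le> 16")
    case True
    have "(real d)^2 \<le> 16^2" using True by (intro power_mono) auto
    moreover have "(2 * j)^2 \<ge> 4^2" using j2 by (intro power_mono) auto
    ultimately show ?thesis by simp
  next
    case False
    have "(2 * j)^2 = 4 * j^2" by (simp add: power_mult_distrib)
    also have "\<dots> > (real d - 1) * (real d - 3)" using jc e by simp
    finally have a: "(2 * j)^2 > (real d - 1) * (real d - 3)" .
    have "real d * ((15/16) * real d - 4) \<ge> 0" using False by (intro mult_nonneg_nonneg) auto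
    then have "(real d - 1) * (real d - 3) \<ge> (real d)^2 / 16" by (simp add: algebra_simps power2_eq_square)
    then show ?thesis using a by simp
  qed
  then show ?thesis unfolding j_def nu_def .
qed



lemma frac_lt1: "0 < a \<Longrightarrow> a < D \<Longrightarrow> a^2 / D^2 < (1::real)"
proof -
  assume a: "0 < a" "a < D"
  have "a^2 < D^2" using a by (intro power_strict_mono) auto
  moreover have "D^2 > 0" using a by simp
  ultimately show ?thesis by simp
qed

lemma c_lt1: "k \<ge> 1 \<Longrightarrow> d \<ge> 2 \<Longrightarrow> c_kd k d < 1"
  unfolding c_eq using Dk_low by (intro frac_lt1) auto

lemma lim1:
  fixes c :: "nat \<Rightarrow> real"
  assumes up: "\<And>k. k \<ge> 1 \<Longrightarrow> c k < 1"
    and low: "\<And>w. 0 < w \<Longrightarrow> w < 1 \<Longrightarrow> \<exists>B\<ge>0. \<forall>k\<ge>1. (pi * real k / (pi * real k / w + B))^2 \<le> c k"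
  shows "c \<longlonglongrightarrow> 1"
proof (rule order_tendstoI)
  fix a :: real assume a: "a < 1"
  define w where "w = sqrt ((max a 0 + 1) / 2)"
  have w2: "w^2 = (max a 0 + 1) / 2" unfolding w_def by simp
  have w: "0 < w" "w < 1" unfolding w_def using a by (auto simp: real_sqrt_lt_1_iff max_def)
  have aw: "a < w^2" unfolding w2 using a by (auto simp: max_def)
  obtain B where B: "B \<ge> 0" "\<And>k. k \<ge> 1 \<Longrightarrow> (pi * real k / (pi * real k / w + B))^2 \<le> c k"
    using low[OF w] by auto
  have "(\<lambda>k. (pi / (pi / w + B / real k))^2) \<longlonglongrightarrow> (pi / (pi / w + 0))^2"
    using w by (intro tendsto_intros) auto
  then have lim: "(\<lambda>k. (pi / (pi / w + B / real k))^2) \<longlonglongrightarrow> w^2" using w by simp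
  have ev: "eventually (\<lambda>k. a < (pi / (pi / w + B / real k))^2) sequentially"
    by (rule order_tendstoD(1)[OF lim aw])
  show "eventually (\<lambda>k. a < c k) sequentially"
    using ev eventually_ge_at_top[of "1::nat"]
  proof eventually_elim
    case (elim k)
    have k0: "real k > 0" using elim(2) by simp
    have "pi / (pi / w + B / real k) = pi * real k / (pi * real k / w + B)"
      using k0 w by (simp add: field_simps)
    then show ?case using elim B(2)[OF elim(2)] by simp
  qed
next
  fix a :: real assume a: "a > 1"
  show "eventually (\<lambda>k. c k < a) sequentially"
  proof -
    have "\<forall>k. k \<ge> 1 \<longrightarrow> c k < a" using up a by (meson less_trans)
    then show ?thesis by (intro eventually_sequentiallyI[of 1]) auto
  qed
qed

lemma c_lim: "d \<ge> 2 \<Longrightarrow> (\<lambda>k. c_kd k d) \<longlonglongrightarrow> 1"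
proof (rule lim1)
  assume d: "d \<ge> 2"
  show "c_kd k d < 1" if "k \<ge> 1" for k using c_lt1 that d by simp
  fix w :: real assume w: "0 < w" "w < 1"
  obtain B where B: "B \<ge> 0" "\<And>k. k \<ge> 1 \<Longrightarrow> Dk k d \<le> pi * real k / w + B"
    using Dk_up[OF d w] by auto
  show "\<exists>B\<ge>0. \<forall>k\<ge>1. (pi * real k / (pi * real k / w + B))^2 \<le> c_kd k d"
  proof (intro exI[of _ B] conjI allI impI)
    fix k :: nat assume k: "k \<ge> 1"
    have "pi * real k > 0" using k by simp
    then have D: "0 < Dk k d" using Dk_low[OF k d] by linarith
    have "(pi * real k)^2 / (pi * real k / w + B)^2 \<le> (pi * real k)^2 / (Dk k d)^2"
      using D B(2)[OF k] by (intro divide_left_mono power_mono mult_pos_pos) auto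
    then show "(pi * real k / (pi * real k / w + B))^2 \<le> c_kd k d"
      unfolding c_eq by (simp add: power_divide)
  qed (use B in simp)
qed

lemma c_bound: "k \<ge> 1 \<Longrightarrow> \<exists>C>0. \<forall>d. d \<ge> 2 \<longrightarrow> c_kd k d \<le> C / (real d)^2"
proof -
  assume k: "k \<ge> 1"
  define C where "C = 16 * (pi * real k)^2 + 4"
  show ?thesis
  proof (intro exI[of _ C] conjI allI impI)
    show "C > 0" unfolding C_def by (simp add: add_nonneg_pos)
    fix d :: nat assume d: "d \<ge> 2"
    show "c_kd k d \<le> C / (real d)^2"
    proof (cases "d = 2")
      case True
      have "c_kd k d < 1" by (rule c_lt1[OF k d])
      moreover have "1 \<le> C / (real d)^2" using True unfolding C_def by simp
      ultimately show ?thesis by simp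
    next
      case False
      define j where "j = bessel_zero (real d / 2 - 1) 1"
      have j2: "j \<ge> 2" unfolding j_def by (rule j1_ge2) (use nu_ge[OF d False] in simp)
      have D: "Dk k d \<ge> 2 * j" unfolding j_def by (rule Dk_big[OF k d False])
      have jb: "(2 * j)^2 \<ge> (real d)^2 / 16" unfolding j_def by (rule j1_big[OF d False])
      have d0: "(real d)^2 / 16 > 0" using d by simp
      have "(Dk k d)^2 \<ge> (2 * j)^2" using D j2 by (intro power_mono) auto
      then have DD: "(Dk k d)^2 \<ge> (real d)^2 / 16" using jb by simp
      have Dp: "(Dk k d)^2 > 0" using D j2 by simp
      have "c_kd k d = (pi * real k)^2 / (Dk k d)^2" by (rule c_eq)
      also have "\<dots> \<le> (pi * real k)^2 / ((real d)^2 / 16)"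
        using DD d0 Dp by (intro divide_left_mono) auto
      also have "\<dots> = 16 * (pi * real k)^2 / (real d)^2" by simp
      also have "\<dots> \<le> C / (real d)^2" unfolding C_def using d by (intro divide_right_mono) auto
      finally show ?thesis .
    qed
  qed
qed

theorem proposition3p1:
  shows "(\<forall>k d. k \<ge> 1 \<longrightarrow> d \<ge> 2 \<longrightarrow> c_kd k d < 1)
       \<and> (\<forall>d. d \<ge> 2 \<longrightarrow> (\<lambda>k. c_kd k d) \<longlonglongrightarrow> 1)
       \<and> (\<forall>k. k \<ge> 1 \<longrightarrow> (\<exists>C>0. \<forall>d. d \<ge> 2 \<longrightarrow> c_kd k d \<le> C / (real d)^2))"
  using c_lt1 c_lim c_bound by blast


end
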